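(* Let $\alpha\in(0,1)$, $R>0$, and let $V(\lambda)$ be the maximal Phase-II observation time when at the contact time $t_2$ the target is on the boundary of the observation disk with relative bearing $\lambda\in[-\pi,\pi]$. Then $V(\lambda)=0$ whenever $\lambda\in[\cos^{-1}(-\alpha),\pi]\cup[-\pi,-\cos^{-1}(-\alpha)]$.
   Context: Target: position $(0,y_T(t))$, $\dot y_T=1$. Observer: position $(x_O(t),y_O(t))$, $\dot x_O=\alpha\cos\psi(t)$, $\dot y_O=\alpha\sin\psi(t)$, heading $\psi$ a measurable control. Contact with bearing $\lambda$ at time $t_2$ means $\big(x_O(t_2),y_O(t_2)-y_T(t_2)\big)=R(\sin\lambda,\cos\lambda)$. For a control on $[t_2,\infty)$, $t_f=\inf\{t\ge t_2: x_O(t)^2+(y_O(t)-y_T(t))^2>R^2\}$ and the observation time is $t_f-t_2$; $V(\lambda)$ is the supremum of $t_f-t_2$ over all controls. *)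

theory Defs
  imports "HOL-Analysis.Analysis"
begin

text \<open>Contact at time t2, target at (0, yT t) with yT t2 = y0 and
  unit speed in the y direction.
  At t2 the relative position is R (sin lam, cos lam).\<close>

definition target_y :: "real \<Rightarrow> real \<Rightarrow> real \<Rightarrow> real" where
  "target_y t2 y0 t = y0 + (t - t2)"

definition observer_x :: "real \<Rightarrow> real \<Rightarrow> real \<Rightarrow> (real \<Rightarrow> real) \<Rightarrow> real \<Rightarrow> real \<Rightarrow> real" where
  "observer_x \<alpha> R lam \<psi> t2 t = R * sin lam + integral {t2..t} (\<lambda>s. \<alpha> * cos (\<psi> s))"

definition observer_y :: "real \<Rightarrow> real \<Rightarrow> real \<Rightarrow> (real \<Rightarrow> real) \<Rightarrow> real \<Rightarrow> real \<Rightarrow> real \<Rightarrow> real" where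
  "observer_y \<alpha> R lam \<psi> t2 y0 t =
     y0 + R * cos lam + integral {t2..t} (\<lambda>s. \<alpha> * sin (\<psi> s))"

definition exit_time :: "real \<Rightarrow> real \<Rightarrow> real \<Rightarrow> (real \<Rightarrow> real) \<Rightarrow> real \<Rightarrow> real \<Rightarrow> ereal" where
  "exit_time \<alpha> R lam \<psi> t2 y0 =
     (let S = {t. t \<ge> t2 \<and> (observer_x \<alpha> R lam \<psi> t2 t)\<^sup>2
                 + (observer_y \<alpha> R lam \<psi> t2 y0 t - target_y t2 y0 t)\<^sup>2 > R\<^sup>2}
      in if S = {} then \<infinity> else ereal (Inf S))"

definition max_obs_time :: "real \<Rightarrow> real \<Rightarrow> real \<Rightarrow> real \<Rightarrow> real \<Rightarrow> ereal" where
  "max_obs_time \<alpha> R t2 y0 lam =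
     (SUP \<psi> \<in> {\<psi>. \<psi> \<in> borel_measurable lebesgue}. exit_time \<alpha> R lam \<psi> t2 y0 - ereal t2)"

end

theory Submission
  imports Defs
begin

lemma integ_aux:
  fixes \<psi> :: "real \<Rightarrow> real"
  assumes "\<psi> \<in> borel_measurable lebesgue"
  shows "(\<lambda>s. \<alpha> * sin (c0 + \<psi> s)) integrable_on {a..b}"
proof (rule measurable_bounded_by_integrable_imp_integrable[where g="\<lambda>_. \<bar>\<alpha>\<bar>"])
  have "(\<lambda>s. \<alpha> * sin (c0 + \<psi> s)) \<in> borel_measurable lebesgue"
    using assms(1) by measurable
  then show "(\<lambda>s. \<alpha> * sin (c0 + \<psi> s)) \<in> borel_measurable (lebesgue_on {a..b})"
    by (simp add: measurable_restrict_space1)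
  show "(\<lambda>_. \<bar>\<alpha>\<bar>) integrable_on {a..b}" by (rule integrable_const_ivl)
  show "norm (\<alpha> * sin (c0 + \<psi> x)) \<le> \<bar>\<alpha>\<bar>" for x
    by (simp add: abs_mult mult_left_le)
qed auto

lemma main_ineq:
  fixes \<alpha> R lam t2 y0 t :: real and \<psi> :: "real \<Rightarrow> real"
  assumes "0 < \<alpha>" "\<alpha> < 1" "R > 0" "cos lam \<le> -\<alpha>" "t2 < t"
    and m: "\<psi> \<in> borel_measurable lebesgue"
  shows "(observer_x \<alpha> R lam \<psi> t2 t)\<^sup>2
                 + (observer_y \<alpha> R lam \<psi> t2 y0 t - target_y t2 y0 t)\<^sup>2 > R\<^sup>2"
proof -
  define h where "h = t - t2"
  have h: "h > 0" using assms h_def by simp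
  define a where "a = integral {t2..t} (\<lambda>s. \<alpha> * cos (\<psi> s))"
  define b where "b = integral {t2..t} (\<lambda>s. \<alpha> * sin (\<psi> s))"
  have ic: "(\<lambda>s. \<alpha> * cos (\<psi> s)) integrable_on {t2..t}"
    using integ_aux[OF m, of \<alpha> "pi/2" t2 t] by (simp add: sin_add)
  have is0: "(\<lambda>s. \<alpha> * sin (\<psi> s)) integrable_on {t2..t}"
    using integ_aux[OF m, of \<alpha> 0 t2 t] by simp
  have il: "(\<lambda>s. \<alpha> * sin (lam + \<psi> s)) integrable_on {t2..t}"
    using integ_aux[OF m, of \<alpha> lam t2 t] by simp
  have "integral {t2..t} (\<lambda>s. \<alpha> * sin (lam + \<psi> s))
      = integral {t2..t} (\<lambda>s. sin lam * (\<alpha> * cos (\<psi> s)) + cos lam * (\<alpha> * sin (\<psi> s)))"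
    by (rule integral_cong) (simp add: sin_add algebra_simps)
  also have "\<dots> = sin lam * a + cos lam * b"
  proof -
    have "integral {t2..t} (\<lambda>s. sin lam * (\<alpha> * cos (\<psi> s)) + cos lam * (\<alpha> * sin (\<psi> s)))
      = integral {t2..t} (\<lambda>s. sin lam * (\<alpha> * cos (\<psi> s))) + integral {t2..t} (\<lambda>s. cos lam * (\<alpha> * sin (\<psi> s)))"
      by (rule integral_add) (use integrable_on_cmult_left[OF ic, of "sin lam"] integrable_on_cmult_left[OF is0, of "cos lam"] in auto)
    also have "\<dots> = sin lam * a + cos lam * b"
      unfolding a_def b_def by (rule arg_cong2[where f="(+)"]; rule integral_mult_right)
    finally show ?thesis .
  qed
  finally have e1: "integral {t2..t} (\<lambda>s. \<alpha> * sin (lam + \<psi> s)) = sin lam * a + cos lam * b" .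
  have "integral {t2..t} (\<lambda>s. - \<alpha>) \<le> integral {t2..t} (\<lambda>s. \<alpha> * sin (lam + \<psi> s))"
    by (rule integral_le[OF integrable_const_ivl il]) (use assms mult_left_mono[OF sin_ge_minus_one, of \<alpha>] in auto)
  then have L: "sin lam * a + cos lam * b \<ge> - \<alpha> * h"
    using e1 assms h_def by (simp add: mult.commute)
  have "integral {t2..t} (\<lambda>s. \<alpha> * sin (\<psi> s)) \<le> integral {t2..t} (\<lambda>s. \<alpha>)"
    by (rule integral_le[OF is0 integrable_const_ivl]) (use assms mult_left_mono[OF sin_le_one, of \<alpha>] in auto)
  then have B: "b \<le> \<alpha> * h" using assms h_def b_def by (simp add: mult.commute)
  have "observer_x \<alpha> R lam \<psi> t2 t = R * sin lam + a"
    by (simp add: observer_x_def a_def)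
  moreover have "observer_y \<alpha> R lam \<psi> t2 y0 t - target_y t2 y0 t = R * cos lam + b - h"
    by (simp add: observer_y_def target_y_def b_def h_def)
  moreover have "(R * sin lam + a)\<^sup>2 + (R * cos lam + b - h)\<^sup>2
     = R\<^sup>2 + 2 * R * (sin lam * a + cos lam * b - cos lam * h)
       + a\<^sup>2 + (h - b)\<^sup>2"
  proof -
    have "(R * sin lam + a)\<^sup>2 + (R * cos lam + b - h)\<^sup>2
     = R\<^sup>2 * ((sin lam)\<^sup>2 + (cos lam)\<^sup>2) + 2 * R * (sin lam * a + cos lam * b - cos lam * h)
       + a\<^sup>2 + (h - b)\<^sup>2"
      unfolding power2_eq_square by algebra
    then show ?thesis by (simp only: sin_cos_squared_add mult_1_right)
  qed
  moreover have "2 * R * (sin lam * a + cos lam * b - cos lam * h) \<ge> 0"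
  proof -
    have "cos lam * h \<le> - \<alpha> * h" using assms(4) h by (intro mult_right_mono) auto
    then show ?thesis using L assms(3) by (intro mult_nonneg_nonneg) auto
  qed
  moreover have "(h - b)\<^sup>2 > 0"
  proof -
    have "\<alpha> * h < 1 * h" using h assms(2) by (intro mult_strict_right_mono) auto
    then have "h - b > 0" using B by linarith
    then show ?thesis by simp
  qed
  ultimately show ?thesis using zero_le_power2[of a] by (simp only:)
qed

theorem lemma4:
  fixes \<alpha> R lam t2 y0 :: real
  assumes "0 < \<alpha>" "\<alpha> < 1" "R > 0"
    and "lam \<in> {arccos (-\<alpha>)..pi} \<union> {-pi..-arccos (-\<alpha>)}"
  shows "max_obs_time \<alpha> R t2 y0 lam = 0"
proof -
  have c: "cos lam \<le> -\<alpha>"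
  proof -
    have a0: "0 \<le> arccos (-\<alpha>)" "arccos (-\<alpha>) \<le> pi" "cos (arccos (-\<alpha>)) = -\<alpha>"
      using assms by (auto intro: arccos_lbound arccos_ubound)
    show ?thesis
    proof (cases "lam \<ge> 0")
      case True
      then show ?thesis using assms(4) a0 cos_monotone_0_pi_le[of "arccos (-\<alpha>)" lam]
        by auto
    next
      case False
      then show ?thesis using assms(4) a0 cos_monotone_0_pi_le[of "arccos (-\<alpha>)" "-lam"]
        by auto
    qed
  qed
  have ex: "exit_time \<alpha> R lam \<psi> t2 y0 = ereal t2" if m: "\<psi> \<in> borel_measurable lebesgue" for \<psi>
  proof -
    have "{t. t \<ge> t2 \<and> (observer_x \<alpha> R lam \<psi> t2 t)\<^sup>2
                 + (observer_y \<alpha> R lam \<psi> t2 y0 t - target_y t2 y0 t)\<^sup>2 > R\<^sup>2} = {t2<..}"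
    proof (rule set_eqI)
      fix t
      show "t \<in> {t. t \<ge> t2 \<and> (observer_x \<alpha> R lam \<psi> t2 t)\<^sup>2
                 + (observer_y \<alpha> R lam \<psi> t2 y0 t - target_y t2 y0 t)\<^sup>2 > R\<^sup>2} \<longleftrightarrow> t \<in> {t2<..}"
      proof (cases "t2 < t")
        case True
        then show ?thesis using main_ineq[OF assms(1-3) c True m] by simp
      next
        case False
        have "\<not> ((observer_x \<alpha> R lam \<psi> t2 t2)\<^sup>2
                 + (observer_y \<alpha> R lam \<psi> t2 y0 t2 - target_y t2 y0 t2)\<^sup>2 > R\<^sup>2)"
          by (simp add: observer_x_def observer_y_def target_y_def power_mult_distrib
              flip: distrib_left)
        then show ?thesis using False by (cases "t = t2") auto
      qed
    qed
    then show ?thesis unfolding exit_time_def Let_def by simp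
  qed
  have ne: "(\<lambda>_::real. 0::real) \<in> {\<psi>. \<psi> \<in> borel_measurable lebesgue}" by simp
  have "max_obs_time \<alpha> R t2 y0 lam = (SUP \<psi> \<in> {\<psi>::real\<Rightarrow>real. \<psi> \<in> borel_measurable lebesgue}. (0::ereal))"
    unfolding max_obs_time_def using ex by simp
  also have "\<dots> = 0" using ne by (subst SUP_const) auto
  finally show ?thesis .
qed

end
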